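(* Let $\mathbb{K}\in\{\mathbb{R},\mathbb{C}\}$, $G=\mathrm{GL}_6(\mathbb{K})$. For $x\in G$ define the rank matrix $\mathrm{R}(x)=\begin{bmatrix}\mathrm{rank}_{4\times4}(x)&\mathrm{rank}_{4\times2}(x)\\ \mathrm{rank}_{2\times4}(x)&\mathrm{rank}_{2\times2}(x)\end{bmatrix}$, where $\mathrm{rank}_{i\times j}(x)$ is the rank of the lower right $i\times j$ block of $x$, and for a $2\times2$ integer matrix $R$ put $G_R=\{x\in G:\mathrm{R}(x)=R\}$ (these nonempty sets are exactly the $P$-$P^\tau$ double cosets in $G$, where $P$ is the parabolic subgroup of block upper triangular matrices with three $2\times2$ diagonal blocks). Let $x_{\mathrm{left}}=\begin{bmatrix}0&I_2&0\\0&0&I_2\\0&0&0\end{bmatrix}$, $x_{\mathrm{right}}=x_{\mathrm{left}}^\tau$, let $X_{\mathrm{left}}$ be the left invariant vector field on $G$ whose value at $x$ is $xx_{\mathrm{left}}$, and $X_{\mathrm{right}}$ the right invariant vector field whose value at $x$ is $x_{\mathrm{right}}x$. Let $R$ be such that $G_R\neq\emptyset$ and $R$ is not one of $\begin{bmatrix}4&2\\2&2\end{bmatrix},\begin{bmatrix}4&2\\2&1\end{bmatrix},\begin{bmatrix}3&2\\2&2\end{bmatrix},\begin{bmatrix}3&2\\2&1\end{bmatrix}$. Then either $X_{\mathrm{left}}$ or $X_{\mathrm{right}}$ is transversal to $G_R$.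
   Context: A vector field $X$ on $M$ is transversal to a submanifold $Z$ if $X(z)\notin \mathrm{T}_z(Z)$ for all $z\in Z$. $\tau$ denotes matrix transpose. *)

theory Defs
  imports "HOL-Analysis.Analysis" "HOL-Library.Numeral_Type"
begin

definition idx6 :: "6 \<Rightarrow> nat" where
  "idx6 r = nat (Rep_bit0 r)"

text \<open>The lower right i x j block of x, embedded in a 6x6 matrix (other entries 0);
  its rank equals the rank of the block itself.\<close>
definition lr_block :: "nat \<Rightarrow> nat \<Rightarrow> 'a::field^6^6 \<Rightarrow> 'a^6^6" where
  "lr_block i j x = (\<chi> r c. if 6 - i \<le> idx6 r \<and> 6 - j \<le> idx6 c then x $ r $ c else 0)"

definition rank_blk :: "nat \<Rightarrow> nat \<Rightarrow> 'a::field^6^6 \<Rightarrow> nat" where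
  "rank_blk i j x = rank (lr_block i j x)"

text \<open>The rank matrix R(x), encoded as the tuple (R11, R12, R21, R22).\<close>
definition rank_matrix :: "'a::field^6^6 \<Rightarrow> int \<times> int \<times> int \<times> int" where
  "rank_matrix x = (int (rank_blk 4 4 x), int (rank_blk 4 2 x), int (rank_blk 2 4 x), int (rank_blk 2 2 x))"

definition G_R :: "int \<times> int \<times> int \<times> int \<Rightarrow> ('a::field^6^6) set" where
  "G_R R = {x. invertible x \<and> rank_matrix x = R}"

definition x_left :: "'a::field^6^6" where
  "x_left = (\<chi> r c. if idx6 c = idx6 r + 2 then 1 else 0)"

definition x_right :: "'a::field^6^6" where
  "x_right = transpose x_left"

definition X_left :: "'a::field^6^6 \<Rightarrow> 'a^6^6" where
  "X_left x = x ** x_left"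

definition X_right :: "'a::field^6^6 \<Rightarrow> 'a^6^6" where
  "X_right x = x_right ** x"

text \<open>Tangent space of a subset S (an embedded submanifold) of a real normed vector space at z:
  velocities at 0 of curves in S through z that are differentiable at 0.
  (For complex matrices this is the real tangent space, which as a set equals the complex one.)\<close>
definition tangent_space :: "'v::real_normed_vector set \<Rightarrow> 'v \<Rightarrow> 'v set" where
  "tangent_space S z = {v. \<exists>\<gamma>::real \<Rightarrow> 'v. \<gamma> 0 = z \<and> (\<forall>t. \<gamma> t \<in> S) \<and>
                              (\<gamma> has_vector_derivative v) (at 0)}"

definition transversal :: "('v::real_normed_vector \<Rightarrow> 'v) \<Rightarrow> 'v set \<Rightarrow> bool" where
  "transversal X Z \<longleftrightarrow> (\<forall>z\<in>Z. X z \<notin> tangent_space Z z)"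

definition exceptional_R :: "(int \<times> int \<times> int \<times> int) set" where
  "exceptional_R = {(4,2,2,2), (4,2,2,1), (3,2,2,2), (3,2,2,1)}"

end

theory Submission
  imports Defs
begin
lemma idx6_simps[simp]: "idx6 0 = 0" "idx6 1 = 1" "idx6 2 = 2" "idx6 3 = 3" "idx6 4 = 4" "idx6 5 = 5"
  by (simp_all add: idx6_def bit0.Rep_numeral bit0.Rep_0 bit0.Rep_1)
lemma UNIV6: "(UNIV::6 set) = {0,1,2,3,4,5}"
proof -
  have "x \<in> {0,1,2,3,4,5}" for x :: 6
  proof (cases x)
    case (of_int z)
    then have "z = 0 \<or> z = 1 \<or> z = 2 \<or> z = 3 \<or> z = 4 \<or> z = 5" by auto
    then show ?thesis using of_int by auto
  qed
  then show ?thesis by blast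
qed
lemma sum6: "(\<Sum>k\<in>(UNIV::6 set). f k) = f 0 + (f 1 + (f 2 + (f 3 + (f 4 + f 5))))"
  unfolding UNIV6 by simp
lemma xl_mult:
  fixes z :: "'a::field^6^6"
  shows "(z ** x_left) $ r $ 0 = 0" "(z ** x_left) $ r $ 1 = 0"
   "(z ** x_left) $ r $ 2 = z $ r $ 0" "(z ** x_left) $ r $ 3 = z $ r $ 1"
   "(z ** x_left) $ r $ 4 = z $ r $ 2" "(z ** x_left) $ r $ 5 = z $ r $ 3"
  by (simp_all add: matrix_matrix_mult_def x_left_def sum6)
lemma xr_mult:
  fixes z :: "'a::field^6^6"
  shows "(x_right ** z) $ 0 $ c = 0" "(x_right ** z) $ 1 $ c = 0"
   "(x_right ** z) $ 2 $ c = z $ 0 $ c" "(x_right ** z) $ 3 $ c = z $ 1 $ c"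
   "(x_right ** z) $ 4 $ c = z $ 2 $ c" "(x_right ** z) $ 5 $ c = z $ 3 $ c"
  by (simp_all add: matrix_matrix_mult_def x_right_def x_left_def transpose_def sum6)

lemma inv_ker:
  fixes z :: "'a::field^'n^'n"
  assumes "invertible z" "z *v x = 0" shows "x = 0"
proof -
  obtain B where B: "B ** z = mat 1" using assms(1) unfolding invertible_def by blast
  have "x = (B ** z) *v x" by (simp add: B)
  also have "\<dots> = 0" by (simp add: matrix_vector_mul_assoc[symmetric] assms(2))
  finally show ?thesis .
qed
lemma inv_coker:
  fixes z :: "'a::field^'n^'n"
  assumes "invertible z" "x v* z = 0" shows "x = 0"
proof -
  obtain B where B: "z ** B = mat 1" using assms(1) unfolding invertible_def by blast
  have "x = x v* (z ** B)" by (simp add: B)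
  also have "\<dots> = 0" by (simp add: vector_matrix_mul_assoc[symmetric] assms(2))
  finally show ?thesis .
qed
lemma deriv_entry:
  assumes "(\<gamma> has_vector_derivative v) (at 0)"
  shows "((\<lambda>t. \<gamma> t $ i $ j) has_vector_derivative v $ i $ j) (at 0)"
proof -
  have "bounded_linear (\<lambda>x. x $ i $ j)"
    using bounded_linear_compose[OF bounded_linear_vec_nth bounded_linear_vec_nth] .
  from bounded_linear.has_vector_derivative[OF this assms] show ?thesis .
qed
lemma deriv_zero:
  assumes "\<And>t. f t = 0" "(f has_vector_derivative D) (at x)" shows "D = 0"
proof -
  have "f = (\<lambda>t. 0)" using assms(1) by auto
  then show ?thesis using assms(2) vector_derivative_unique_at has_vector_derivative_const by metis
qed

definition minor2 :: "'a::field^'n^'m \<Rightarrow> 'm \<Rightarrow> 'm \<Rightarrow> 'n \<Rightarrow> 'n \<Rightarrow> 'a" where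
  "minor2 A p p' q q' = A$p$q * A$p'$q' - A$p$q' * A$p'$q"
definition det3 :: "'a::comm_ring \<Rightarrow> 'a \<Rightarrow> 'a \<Rightarrow> 'a \<Rightarrow> 'a \<Rightarrow> 'a \<Rightarrow> 'a \<Rightarrow> 'a \<Rightarrow> 'a \<Rightarrow> 'a" where
  "det3 a11 a12 a13 a21 a22 a23 a31 a32 a33 =
     a11*(a22*a33 - a23*a32) - a12*(a21*a33 - a23*a31) + a13*(a21*a32 - a22*a31)"
definition minor3 :: "'a::field^'n^'m \<Rightarrow> 'm \<Rightarrow> 'm \<Rightarrow> 'm \<Rightarrow> 'n \<Rightarrow> 'n \<Rightarrow> 'n \<Rightarrow> 'a" where
  "minor3 A p1 p2 p3 q1 q2 q3 = det3 (A$p1$q1) (A$p1$q2) (A$p1$q3) (A$p2$q1) (A$p2$q2) (A$p2$q3)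
      (A$p3$q1) (A$p3$q2) (A$p3$q3)"

lemma row_in_rows: "A $ p \<in> rows A"
  unfolding rows_def row_def by (auto simp: vec_lambda_eta)

lemma rank_ge_card: "B \<subseteq> rows A \<Longrightarrow> vec.independent B \<Longrightarrow> card B \<le> rank A"
  unfolding row_rank_def_gen by (rule vec.independent_card_le_dim)

lemma rank_le_card: "rows A \<subseteq> vec.span W \<Longrightarrow> finite W \<Longrightarrow> rank A \<le> card W"
  unfolding row_rank_def_gen by (rule vec.dim_le_card)

lemma rank_ge1:
  fixes A :: "'a::field^'n^'m"
  assumes "A $ p $ q \<noteq> 0" shows "1 \<le> rank A"
proof -
  have ne: "A $ p \<noteq> 0" using assms by auto
  have "vec.independent {A $ p}" using ne by (simp add: vec.independent_insert vec.span_empty)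
  then have "card {A $ p} \<le> rank A" using row_in_rows by (intro rank_ge_card) auto
  then show ?thesis by simp
qed

lemma rank_ge2:
  fixes A :: "'a::field^'n^'m"
  assumes "minor2 A p p' q q' \<noteq> 0" shows "2 \<le> rank A"
proof -
  have r2: "A $ p' \<noteq> 0" using assms by (auto simp: minor2_def)
  have ns: "A $ p \<notin> vec.span {A $ p'}"
  proof
    assume "A $ p \<in> vec.span {A $ p'}"
    then obtain k where "A $ p = k *s A $ p'" by (auto simp: vec.span_singleton)
    then have "A$p$q = k * A$p'$q" "A$p$q' = k * A$p'$q'" by auto
    then have "minor2 A p p' q q' = 0" by (simp add: minor2_def)
    then show False using assms by simp
  qed
  have neq: "A $ p \<noteq> A $ p'" using ns vec.span_base[of "A $ p'" "{A $ p'}"] by auto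
  have "vec.independent {A $ p, A $ p'}"
    using r2 ns neq by (simp add: vec.independent_insert vec.span_empty)
  then have "card {A $ p, A $ p'} \<le> rank A" using row_in_rows by (intro rank_ge_card) auto
  then show ?thesis using neq by simp
qed

lemma det3_dep:
  assumes "a1 = k*b1 + c*d1" "a2 = k*b2 + c*d2" "a3 = k*b3 + c*d3"
  shows "det3 a1 a2 a3 b1 b2 b3 d1 d2 d3 = (0::'a::comm_ring)"
  unfolding assms det3_def by (simp add: algebra_simps)

lemma rank_ge3:
  fixes A :: "'a::field^'n^'m"
  assumes "minor3 A p1 p2 p3 q1 q2 q3 \<noteq> 0" shows "3 \<le> rank A"
proof -
  have r3: "A $ p3 \<noteq> 0"
  proof
    assume "A $ p3 = 0"
    then have "minor3 A p1 p2 p3 q1 q2 q3 = 0" by (simp add: minor3_def det3_def)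
    then show False using assms by simp
  qed
  have ns2: "A $ p2 \<notin> vec.span {A $ p3}"
  proof
    assume "A $ p2 \<in> vec.span {A $ p3}"
    then obtain k where k: "A $ p2 = k *s A $ p3" by (auto simp: vec.span_singleton)
    have "minor3 A p1 p2 p3 q1 q2 q3 = 0" unfolding minor3_def k
      by (simp add: det3_def algebra_simps)
    then show False using assms by simp
  qed
  have ns1: "A $ p1 \<notin> vec.span {A $ p2, A $ p3}"
  proof
    assume "A $ p1 \<in> vec.span {A $ p2, A $ p3}"
    then obtain k where "A $ p1 - k *s A $ p2 \<in> vec.span {A $ p3}" by (auto simp: vec.span_breakdown_eq)
    then obtain c where "A $ p1 - k *s A $ p2 = c *s A $ p3" by (auto simp: vec.span_singleton)
    then have e: "A $ p1 = k *s A $ p2 + c *s A $ p3" by (metis diff_eq_eq add.commute)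
    have "minor3 A p1 p2 p3 q1 q2 q3 = 0" unfolding minor3_def
      by (rule det3_dep[where k=k and c=c]) (simp_all add: e)
    then show False using assms by simp
  qed
  have n23: "A $ p2 \<noteq> A $ p3" using ns2 vec.span_base[of "A $ p3" "{A $ p3}"] by auto
  have n12: "A $ p1 \<noteq> A $ p2" "A $ p1 \<noteq> A $ p3" using ns1 vec.span_base[of "A $ p2" "{A $ p2, A $ p3}"]
     vec.span_base[of "A $ p3" "{A $ p2, A $ p3}"] by auto
  have "vec.independent {A $ p1, A $ p2, A $ p3}"
    using r3 ns1 ns2 n12 n23 by (simp add: vec.independent_insert vec.span_empty)
  then have "card {A $ p1, A $ p2, A $ p3} \<le> rank A" using row_in_rows by (intro rank_ge_card) auto
  then show ?thesis using n12 n23 by simp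
qed

lemma rank_le1:
  fixes A :: "'a::field^'n^'m"
  assumes "\<And>p p' q q'. minor2 A p p' q q' = 0" shows "rank A \<le> 1"
proof (cases "A = 0")
  case True
  have "rows A \<subseteq> vec.span {}" unfolding rows_def row_def True by (auto simp: vec.span_empty zero_vec_def)
  from rank_le_card[OF this] show ?thesis by simp
next
  case False
  then obtain p q where pq: "A $ p $ q \<noteq> 0" by (metis vec_eq_iff zero_index)
  have "rows A \<subseteq> vec.span {A $ p}"
  proof
    fix x assume "x \<in> rows A"
    then obtain r where x: "x = A $ r" unfolding rows_def row_def by (auto simp: vec_lambda_eta)
    have "A $ r = (A$r$q / A$p$q) *s A $ p"
    proof (subst vec_eq_iff, intro allI)
      fix c
      have "minor2 A p r q c = 0" by (rule assms)
      then show "A $ r $ c = ((A$r$q / A$p$q) *s A $ p) $ c" using pq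
        by (simp add: minor2_def field_simps)
    qed
    then show "x \<in> vec.span {A $ p}" unfolding x by (auto simp: vec.span_singleton)
  qed
  from rank_le_card[OF this] show ?thesis by simp
qed

lemma lrb[simp]: "lr_block i j x $ r $ c = (if 6 - i \<le> idx6 r \<and> 6 - j \<le> idx6 c then x $ r $ c else 0)"
  by (simp add: lr_block_def)

lemma cases6: "r = 0 \<or> r = 1 \<or> r = 2 \<or> r = 3 \<or> r = 4 \<or> r = (5::6)"
proof -
  have "r \<in> (UNIV::6 set)" by simp
  then show ?thesis unfolding UNIV6 by simp
qed

lemma all6: "(\<forall>r::6. P r) \<longleftrightarrow> P 0 \<and> P 1 \<and> P 2 \<and> P 3 \<and> P 4 \<and> P 5"
  using cases6 by metis

lemma rank_zero_mat: "rank (0::'a::field^'n^'m) = 0"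
proof -
  have "rows (0::'a::field^'n^'m) \<subseteq> vec.span {}" unfolding rows_def row_def
    by (auto simp: vec.span_empty zero_vec_def)
  from rank_le_card[OF this] show ?thesis by simp
qed

lemma blk_entry0:
  fixes x :: "'a::field^6^6"
  assumes "rank_blk i j x = 0" "6 - i \<le> idx6 r" "6 - j \<le> idx6 c" shows "x $ r $ c = 0"
proof (rule ccontr)
  assume "x $ r $ c \<noteq> 0"
  then have "lr_block i j x $ r $ c \<noteq> 0" using assms by simp
  from rank_ge1[OF this] assms(1) show False by (simp add: rank_blk_def)
qed

lemma blk_minor2:
  fixes x :: "'a::field^6^6"
  assumes "rank_blk i j x \<le> 1" "6 - i \<le> idx6 p" "6 - i \<le> idx6 p'" "6 - j \<le> idx6 q" "6 - j \<le> idx6 q'"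
  shows "minor2 x p p' q q' = 0"
proof (rule ccontr)
  assume "minor2 x p p' q q' \<noteq> 0"
  then have "minor2 (lr_block i j x) p p' q q' \<noteq> 0" using assms by (simp add: minor2_def)
  from rank_ge2[OF this] assms(1) show False by (simp add: rank_blk_def)
qed

lemma blk_minor3:
  fixes x :: "'a::field^6^6"
  assumes "rank_blk i j x \<le> 2" "6 - i \<le> idx6 p1" "6 - i \<le> idx6 p2" "6 - i \<le> idx6 p3"
    "6 - j \<le> idx6 q1" "6 - j \<le> idx6 q2" "6 - j \<le> idx6 q3"
  shows "minor3 x p1 p2 p3 q1 q2 q3 = 0"
proof (rule ccontr)
  assume "minor3 x p1 p2 p3 q1 q2 q3 \<noteq> 0"
  then have "minor3 (lr_block i j x) p1 p2 p3 q1 q2 q3 \<noteq> 0" using assms by (simp add: minor3_def)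
  from rank_ge3[OF this] assms(1) show False by (simp add: rank_blk_def)
qed

lemma blk_nonzero:
  fixes x :: "'a::field^6^6"
  assumes "1 \<le> rank_blk i j x"
  shows "\<exists>r c. 6 - i \<le> idx6 r \<and> 6 - j \<le> idx6 c \<and> x $ r $ c \<noteq> 0"
proof (rule ccontr)
  assume "\<not> ?thesis"
  then have "lr_block i j x = 0" by (auto simp: vec_eq_iff)
  then have "rank_blk i j x = 0" by (simp add: rank_blk_def rank_zero_mat)
  then show False using assms by simp
qed

lemma blk_minor_nonzero:
  fixes x :: "'a::field^6^6"
  assumes "2 \<le> rank_blk i j x"
  shows "\<exists>p p' q q'. 6 - i \<le> idx6 p \<and> 6 - i \<le> idx6 p' \<and> 6 - j \<le> idx6 q \<and> 6 - j \<le> idx6 q'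
     \<and> minor2 x p p' q q' \<noteq> 0"
proof (rule ccontr)
  assume "\<not> ?thesis"
  then have "\<And>p p' q q'. minor2 (lr_block i j x) p p' q q' = 0"
    by (auto simp: minor2_def)
  from rank_le1[OF this] assms show False by (simp add: rank_blk_def)
qed

lemma d_minor2:
  fixes \<gamma> :: "real \<Rightarrow> 'a::real_normed_field^'n^'m"
  assumes "(\<gamma> has_vector_derivative v) (at 0)" "\<And>t. minor2 (\<gamma> t) p p' q q' = 0"
  shows "\<gamma> 0$p$q * v$p'$q' + v$p$q * \<gamma> 0$p'$q' - (\<gamma> 0$p$q' * v$p'$q + v$p$q' * \<gamma> 0$p'$q) = 0"
proof -
  have "((\<lambda>t. minor2 (\<gamma> t) p p' q q') has_vector_derivative
     (\<gamma> 0$p$q * v$p'$q' + v$p$q * \<gamma> 0$p'$q' - (\<gamma> 0$p$q' * v$p'$q + v$p$q' * \<gamma> 0$p'$q))) (at 0)"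
    unfolding minor2_def by (intro has_vector_derivative_diff has_vector_derivative_mult deriv_entry[OF assms(1)])
  from deriv_zero[OF assms(2) this] show ?thesis .
qed

lemma d_det3:
  fixes f1 f2 f3 f4 f5 f6 f7 f8 f9 :: "real \<Rightarrow> 'a::real_normed_field"
  assumes "(f1 has_vector_derivative g1) (at x)" "(f2 has_vector_derivative g2) (at x)"
    "(f3 has_vector_derivative g3) (at x)" "(f4 has_vector_derivative g4) (at x)"
    "(f5 has_vector_derivative g5) (at x)" "(f6 has_vector_derivative g6) (at x)"
    "(f7 has_vector_derivative g7) (at x)" "(f8 has_vector_derivative g8) (at x)"
    "(f9 has_vector_derivative g9) (at x)"
  shows "((\<lambda>t. det3 (f1 t) (f2 t) (f3 t) (f4 t) (f5 t) (f6 t) (f7 t) (f8 t) (f9 t)) has_vector_derivative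
    (det3 g1 g2 g3 (f4 x) (f5 x) (f6 x) (f7 x) (f8 x) (f9 x)
   + det3 (f1 x) (f2 x) (f3 x) g4 g5 g6 (f7 x) (f8 x) (f9 x)
   + det3 (f1 x) (f2 x) (f3 x) (f4 x) (f5 x) (f6 x) g7 g8 g9)) (at x)"
  unfolding det3_def
  apply (rule has_vector_derivative_eq_rhs)
   apply ((rule has_vector_derivative_add has_vector_derivative_diff has_vector_derivative_mult assms)+)[1]
  apply (simp add: algebra_simps)
  done

lemma d_minor3:
  fixes \<gamma> :: "real \<Rightarrow> 'a::real_normed_field^'n^'m"
  assumes "(\<gamma> has_vector_derivative v) (at 0)" "\<And>t. minor3 (\<gamma> t) p1 p2 p3 q1 q2 q3 = 0"
  shows "det3 (v$p1$q1) (v$p1$q2) (v$p1$q3) (\<gamma> 0$p2$q1) (\<gamma> 0$p2$q2) (\<gamma> 0$p2$q3) (\<gamma> 0$p3$q1) (\<gamma> 0$p3$q2) (\<gamma> 0$p3$q3)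
    + det3 (\<gamma> 0$p1$q1) (\<gamma> 0$p1$q2) (\<gamma> 0$p1$q3) (v$p2$q1) (v$p2$q2) (v$p2$q3) (\<gamma> 0$p3$q1) (\<gamma> 0$p3$q2) (\<gamma> 0$p3$q3)
    + det3 (\<gamma> 0$p1$q1) (\<gamma> 0$p1$q2) (\<gamma> 0$p1$q3) (\<gamma> 0$p2$q1) (\<gamma> 0$p2$q2) (\<gamma> 0$p2$q3) (v$p3$q1) (v$p3$q2) (v$p3$q3) = 0"
proof -
  note e = deriv_entry[OF assms(1)]
  from deriv_zero[OF assms(2)[unfolded minor3_def] d_det3[OF e[of p1 q1] e[of p1 q2] e[of p1 q3]
     e[of p2 q1] e[of p2 q2] e[of p2 q3] e[of p3 q1] e[of p3 q2] e[of p3 q3]]]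
  show ?thesis .
qed

lemma entry_zero_deriv:
  fixes \<gamma> :: "real \<Rightarrow> 'a::real_normed_field^'n^'m"
  assumes "(\<gamma> has_vector_derivative v) (at 0)" "\<And>t. \<gamma> t $ r $ c = 0"
  shows "v $ r $ c = 0"
  using deriv_zero[OF assms(2) deriv_entry[OF assms(1)]] .

lemma mv_u45: fixes z :: "'a::field^6^6" shows "(z *v (\<chi> c. if c = 4 then \<alpha> else if c = 5 then \<beta> else 0)) $ r = z$r$4 * \<alpha> + z$r$5 * \<beta>"
  by (simp add: matrix_vector_mult_def sum6)

lemma vm_w45: fixes z :: "'a::field^6^6" shows "((\<chi> r. if r = 4 then \<alpha> else if r = 5 then \<beta> else 0) v* z) $ c = z$4$c * \<alpha> + z$5$c * \<beta>"
  by (simp add: vector_matrix_mult_def sum6)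

lemma caseA:
  fixes \<gamma> :: "real \<Rightarrow> 'a::real_normed_field^6^6"
  assumes inv: "invertible (\<gamma> 0)" and der: "(\<gamma> has_vector_derivative (x_right ** \<gamma> 0)) (at 0)"
    and rk: "\<And>t. rank_blk 4 2 (\<gamma> t) = 0"
  shows False
proof -
  let ?z = "\<gamma> 0"
  have e0: "\<gamma> t $ r $ c = 0" if "2 \<le> idx6 r" "4 \<le> idx6 c" for t r c
    using blk_entry0[OF rk, of r c t] that by simp
  have d0: "(x_right ** ?z) $ r $ c = 0" if "2 \<le> idx6 r" "4 \<le> idx6 c" for r c
    using entry_zero_deriv[OF der e0[OF that]] .
  have z4: "?z $ r $ 4 = 0" for r
    using cases6[of r] d0[of 2 4] d0[of 3 4] e0[of _ 4 0] by (auto simp: xr_mult)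
  have "?z *v (\<chi> c. if c = 4 then 1 else if c = 5 then 0 else 0) = 0"
    by (simp add: vec_eq_iff mv_u45 z4)
  from inv_ker[OF inv this] show False by (simp add: vec_eq_iff all6)
qed

lemma caseB:
  fixes \<gamma> :: "real \<Rightarrow> 'a::real_normed_field^6^6"
  assumes inv: "invertible (\<gamma> 0)" and der: "(\<gamma> has_vector_derivative (x_right ** \<gamma> 0)) (at 0)"
    and rk: "\<And>t. rank_blk 2 2 (\<gamma> t) = 0" and nz: "1 \<le> rank_blk 4 2 (\<gamma> 0)"
  shows False
proof -
  let ?z = "\<gamma> 0"
  have e0: "\<gamma> t $ r $ c = 0" if "4 \<le> idx6 r" "4 \<le> idx6 c" for t r c
    using blk_entry0[OF rk, of r c t] that by simp
  have d0: "(x_right ** ?z) $ r $ c = 0" if "4 \<le> idx6 r" "4 \<le> idx6 c" for r c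
    using entry_zero_deriv[OF der e0[OF that]] .
  obtain r c where rc: "2 \<le> idx6 r" "4 \<le> idx6 c" "?z $ r $ c \<noteq> 0"
    using blk_nonzero[OF nz] by auto
  have "?z $ r $ c = 0"
    using cases6[of r] cases6[of c] rc(1,2) d0[of 4 4] d0[of 4 5] d0[of 5 4] d0[of 5 5]
      e0[of 4 4 0] e0[of 4 5 0] e0[of 5 4 0] e0[of 5 5 0]
    by (auto simp: xr_mult)
  with rc show False by simp
qed

lemma caseA':
  fixes \<gamma> :: "real \<Rightarrow> 'a::real_normed_field^6^6"
  assumes inv: "invertible (\<gamma> 0)" and der: "(\<gamma> has_vector_derivative (\<gamma> 0 ** x_left)) (at 0)"
    and rk: "\<And>t. rank_blk 2 4 (\<gamma> t) = 0"
  shows False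
proof -
  let ?z = "\<gamma> 0"
  have e0: "\<gamma> t $ r $ c = 0" if "4 \<le> idx6 r" "2 \<le> idx6 c" for t r c
    using blk_entry0[OF rk, of r c t] that by simp
  have d0: "(?z ** x_left) $ r $ c = 0" if "4 \<le> idx6 r" "2 \<le> idx6 c" for r c
    using entry_zero_deriv[OF der e0[OF that]] .
  have z4: "?z $ 4 $ c = 0" for c
    using cases6[of c] d0[of 4 2] d0[of 4 3] e0[of 4 _ 0] by (auto simp: xl_mult)
  have "(\<chi> r. if r = 4 then 1 else if r = 5 then 0 else 0) v* ?z = 0"
    by (simp add: vec_eq_iff vm_w45 z4)
  from inv_coker[OF inv this] show False by (simp add: vec_eq_iff all6)
qed

lemma caseC_core:
  fixes z v :: "'a::field^6^6"
  assumes inv: "invertible z"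
  and vs: "\<And>c. v $ s $ c = z $ s' $ c"
  and v2: "\<And>c. v $ 2 $ c = z $ 0 $ c" and v3: "\<And>c. v $ 3 $ c = z $ 1 $ c"
  and M: "\<And>r r'. 2 \<le> idx6 r \<Longrightarrow> 2 \<le> idx6 r' \<Longrightarrow> minor2 z r r' 4 5 = 0"
  and Ds: "\<And>k. 2 \<le> idx6 k \<Longrightarrow> z$k$4 * v$s$5 + v$k$4 * z$s$5 - (z$k$5 * v$s$4 + v$k$5 * z$s$4) = 0"
  and idx: "2 \<le> idx6 s" "2 \<le> idx6 s'"
  and nz: "z$s$4 \<noteq> 0 \<or> z$s$5 \<noteq> 0"
  shows False
proof -
  have y0: "z$0$4 * z$s$5 - z$0$5 * z$s$4 = 0"
    using Ds[of 2] M[of 2 s'] idx by (simp add: vs v2 minor2_def algebra_simps)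
  have y1: "z$1$4 * z$s$5 - z$1$5 * z$s$4 = 0"
    using Ds[of 3] M[of 3 s'] idx by (simp add: vs v3 minor2_def algebra_simps)
  have yr: "z$r$4 * z$s$5 - z$r$5 * z$s$4 = 0" if "2 \<le> idx6 r" for r
    using M[of r s] that idx by (simp add: minor2_def)
  have "z *v (\<chi> c. if c = 4 then z$s$5 else if c = 5 then - z$s$4 else 0) = 0"
    using y0 y1 yr[of 2] yr[of 3] yr[of 4] yr[of 5]
    by (simp add: vec_eq_iff all6 mv_u45 algebra_simps)
  from inv_ker[OF inv this] nz show False by (simp add: vec_eq_iff all6)
qed

lemma caseC'_core:
  fixes z v :: "'a::field^6^6"
  assumes inv: "invertible z"
  and vs: "\<And>r. v $ r $ s = z $ r $ s'"
  and v2: "\<And>r. v $ r $ 2 = z $ r $ 0" and v3: "\<And>r. v $ r $ 3 = z $ r $ 1"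
  and M: "\<And>c c'. 2 \<le> idx6 c \<Longrightarrow> 2 \<le> idx6 c' \<Longrightarrow> minor2 z 4 5 c c' = 0"
  and Ds: "\<And>k. 2 \<le> idx6 k \<Longrightarrow> z$4$k * v$5$s + v$4$k * z$5$s - (z$4$s * v$5$k + v$4$s * z$5$k) = 0"
  and idx: "2 \<le> idx6 s" "2 \<le> idx6 s'"
  and nz: "z$4$s \<noteq> 0 \<or> z$5$s \<noteq> 0"
  shows False
proof -
  have y0: "z$4$0 * z$5$s - z$4$s * z$5$0 = 0"
    using Ds[of 2] M[of 2 s'] idx by (simp add: vs v2 minor2_def algebra_simps)
  have y1: "z$4$1 * z$5$s - z$4$s * z$5$1 = 0"
    using Ds[of 3] M[of 3 s'] idx by (simp add: vs v3 minor2_def algebra_simps)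
  have yr: "z$4$c * z$5$s - z$4$s * z$5$c = 0" if "2 \<le> idx6 c" for c
    using M[of c s] that idx by (simp add: minor2_def)
  have "(\<chi> r. if r = 4 then z$5$s else if r = 5 then - z$4$s else 0) v* z = 0"
    using y0 y1 yr[of 2] yr[of 3] yr[of 4] yr[of 5]
    by (simp add: vec_eq_iff all6 vm_w45 algebra_simps)
  from inv_coker[OF inv this] nz show False by (simp add: vec_eq_iff all6)
qed

lemma caseC:
  fixes \<gamma> :: "real \<Rightarrow> 'a::real_normed_field^6^6"
  assumes inv: "invertible (\<gamma> 0)" and der: "(\<gamma> has_vector_derivative (x_right ** \<gamma> 0)) (at 0)"
    and rk: "\<And>t. rank_blk 4 2 (\<gamma> t) \<le> 1" and nz: "1 \<le> rank_blk 2 2 (\<gamma> 0)"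
  shows False
proof -
  let ?z = "\<gamma> 0"
  let ?v = "x_right ** \<gamma> 0"
  obtain s q where sq: "4 \<le> idx6 s" "4 \<le> idx6 q" "?z$s$q \<noteq> 0" using blk_nonzero[OF nz] by auto
  have s45: "s = 4 \<or> s = 5" using cases6[of s] sq(1) by auto
  have q45: "q = 4 \<or> q = 5" using cases6[of q] sq(2) by auto
  define s' where "s' = (if s = 4 then 2 else 3 :: 6)"
  have vs: "\<And>c. ?v $ s $ c = ?z $ s' $ c" using s45 by (auto simp: s'_def xr_mult)
  have M: "\<And>r r'. 2 \<le> idx6 r \<Longrightarrow> 2 \<le> idx6 r' \<Longrightarrow> minor2 ?z r r' 4 5 = 0"
    by (rule blk_minor2[OF rk]) auto
  have Ds: "?z$k$4 * ?v$s$5 + ?v$k$4 * ?z$s$5 - (?z$k$5 * ?v$s$4 + ?v$k$5 * ?z$s$4) = 0"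
    if "2 \<le> idx6 k" for k
  proof (rule d_minor2[OF der])
    show "minor2 (\<gamma> t) k s 4 5 = 0" for t by (rule blk_minor2[OF rk]) (use that sq in auto)
  qed
  show False
  proof (rule caseC_core[OF inv vs _ _ M Ds])
    show "2 \<le> idx6 s" using sq by simp
    show "2 \<le> idx6 s'" by (simp add: s'_def)
    show "?z$s$4 \<noteq> 0 \<or> ?z$s$5 \<noteq> 0" using sq q45 by auto
  qed (auto simp: xr_mult)
qed

lemma caseC':
  fixes \<gamma> :: "real \<Rightarrow> 'a::real_normed_field^6^6"
  assumes inv: "invertible (\<gamma> 0)" and der: "(\<gamma> has_vector_derivative (\<gamma> 0 ** x_left)) (at 0)"
    and rk: "\<And>t. rank_blk 2 4 (\<gamma> t) \<le> 1" and nz: "1 \<le> rank_blk 2 2 (\<gamma> 0)"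
  shows False
proof -
  let ?z = "\<gamma> 0"
  let ?v = "\<gamma> 0 ** x_left"
  obtain q s where sq: "4 \<le> idx6 q" "4 \<le> idx6 s" "?z$q$s \<noteq> 0" using blk_nonzero[OF nz] by auto
  have s45: "s = 4 \<or> s = 5" using cases6[of s] sq(2) by auto
  have q45: "q = 4 \<or> q = 5" using cases6[of q] sq(1) by auto
  define s' where "s' = (if s = 4 then 2 else 3 :: 6)"
  have vs: "\<And>r. ?v $ r $ s = ?z $ r $ s'" using s45 by (auto simp: s'_def xl_mult)
  have M: "\<And>c c'. 2 \<le> idx6 c \<Longrightarrow> 2 \<le> idx6 c' \<Longrightarrow> minor2 ?z 4 5 c c' = 0"
    by (rule blk_minor2[OF rk]) auto
  have Ds: "?z$4$k * ?v$5$s + ?v$4$k * ?z$5$s - (?z$4$s * ?v$5$k + ?v$4$s * ?z$5$k) = 0"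
    if "2 \<le> idx6 k" for k
  proof (rule d_minor2[OF der])
    show "minor2 (\<gamma> t) 4 5 k s = 0" for t by (rule blk_minor2[OF rk]) (use that sq in auto)
  qed
  show False
  proof (rule caseC'_core[OF inv vs _ _ M Ds])
    show "2 \<le> idx6 s" using sq by simp
    show "2 \<le> idx6 s'" by (simp add: s'_def)
    show "?z$4$s \<noteq> 0 \<or> ?z$5$s \<noteq> 0" using sq q45 by auto
  qed (auto simp: xl_mult)
qed

lemma sum3:
  fixes f :: "'n::finite \<Rightarrow> 'a::field"
  assumes "a \<noteq> i" "a \<noteq> k" "i \<noteq> k"
  shows "(\<Sum>r\<in>UNIV. f r * (if r = a then \<alpha> else if r = i then \<beta> else if r = k then \<gamma> else 0))
     = f a * \<alpha> + f i * \<beta> + f k * \<gamma>"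
proof -
  have "\<And>r. f r * (if r = a then \<alpha> else if r = i then \<beta> else if r = k then \<gamma> else 0)
     = (if r = a then f a * \<alpha> else 0) + (if r = i then f i * \<beta> else 0) + (if r = k then f k * \<gamma> else 0)"
    using assms by auto
  then show ?thesis by (simp add: sum.distrib)
qed

lemma caseS_core:
  fixes z v :: "'a::field^6^6"
  assumes inv: "invertible z"
  and v2: "\<And>r. v $ r $ 2 = z $ r $ 0" and v3: "\<And>r. v $ r $ 3 = z $ r $ 1"
  and v4: "\<And>r. v $ r $ 4 = z $ r $ 2" and v5: "\<And>r. v $ r $ 5 = z $ r $ 3"
  and dist: "a \<noteq> i" "a \<noteq> k" "i \<noteq> k"
  and idx: "2 \<le> idx6 a" "2 \<le> idx6 i" "2 \<le> idx6 k"
  and \<delta>: "minor2 z i k 4 5 \<noteq> 0"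
  and M3: "\<And>c1 c2 c3. 2 \<le> idx6 c1 \<Longrightarrow> 2 \<le> idx6 c2 \<Longrightarrow> 2 \<le> idx6 c3 \<Longrightarrow> minor3 z a i k c1 c2 c3 = 0"
  and D: "\<And>b. 2 \<le> idx6 b \<Longrightarrow>
    det3 (v$a$b) (v$a$4) (v$a$5) (z$i$b) (z$i$4) (z$i$5) (z$k$b) (z$k$4) (z$k$5)
    + det3 (z$a$b) (z$a$4) (z$a$5) (v$i$b) (v$i$4) (v$i$5) (z$k$b) (z$k$4) (z$k$5)
    + det3 (z$a$b) (z$a$4) (z$a$5) (z$i$b) (z$i$4) (z$i$5) (v$k$b) (v$k$4) (v$k$5) = 0"
  shows False
proof -
  have y0: "minor3 z a i k 0 4 5 = 0"
  proof -
    have "minor3 z a i k 0 4 5 + minor3 z a i k 2 2 5 + minor3 z a i k 2 4 3 = 0"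
      using D[of 2] by (simp add: v2 v4 v5 minor3_def det3_def algebra_simps)
    then show ?thesis using M3[of 2 2 5] M3[of 2 4 3] by simp
  qed
  have y1: "minor3 z a i k 1 4 5 = 0"
  proof -
    have "minor3 z a i k 1 4 5 + minor3 z a i k 3 2 5 + minor3 z a i k 3 4 3 = 0"
      using D[of 3] by (simp add: v3 v4 v5 minor3_def det3_def algebra_simps)
    then show ?thesis using M3[of 3 2 5] M3[of 3 4 3] by simp
  qed
  define w where "w = (\<chi> r. if r = a then minor2 z i k 4 5
     else if r = i then - (z$a$4 * z$k$5 - z$a$5 * z$k$4)
     else if r = k then z$a$4 * z$i$5 - z$a$5 * z$i$4 else 0)"
  have wc: "(w v* z) $ c = minor3 z a i k c 4 5" for c
    unfolding w_def vector_matrix_mult_def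
    by (simp add: sum3[OF dist] minor3_def det3_def minor2_def algebra_simps)
  have "w v* z = 0"
    using y0 y1 M3[of 2 4 5] M3[of 3 4 5] M3[of 4 4 5] M3[of 5 4 5]
    by (simp add: vec_eq_iff all6 wc)
  from inv_coker[OF inv this] have "w $ a = 0" by simp
  with \<delta> show False by (simp add: w_def)
qed

lemma caseS:
  fixes \<gamma> :: "real \<Rightarrow> 'a::real_normed_field^6^6"
  assumes inv: "invertible (\<gamma> 0)" and der: "(\<gamma> has_vector_derivative (\<gamma> 0 ** x_left)) (at 0)"
    and rk: "\<And>t. rank_blk 4 4 (\<gamma> t) \<le> 2" and nz: "2 \<le> rank_blk 4 2 (\<gamma> 0)"
  shows False
proof -
  let ?z = "\<gamma> 0"
  let ?v = "\<gamma> 0 ** x_left"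
  obtain p p' q q' where pq: "2 \<le> idx6 p" "2 \<le> idx6 p'" "4 \<le> idx6 q" "4 \<le> idx6 q'"
    "minor2 ?z p p' q q' \<noteq> 0"
    using blk_minor_nonzero[OF nz] by auto
  have q45: "q = 4 \<or> q = 5" "q' = 4 \<or> q' = 5" using cases6[of q] cases6[of q'] pq(3,4) by auto
  have \<delta>: "minor2 ?z p p' 4 5 \<noteq> 0"
    using q45 pq(5) by (auto simp: minor2_def algebra_simps)
  have pp': "p \<noteq> p'" using \<delta> by (auto simp: minor2_def)
  have "\<exists>a. 2 \<le> idx6 a \<and> a \<noteq> p \<and> a \<noteq> p'"
  proof -
    consider "p \<noteq> 2 \<and> p' \<noteq> 2" | "p \<noteq> 3 \<and> p' \<noteq> 3" | "p \<noteq> 4 \<and> p' \<noteq> 4" by fastforce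
    then show ?thesis
    proof cases
      case 1 then show ?thesis by (intro exI[of _ 2]) simp
    next
      case 2 then show ?thesis by (intro exI[of _ 3]) simp
    next
      case 3 then show ?thesis by (intro exI[of _ 4]) simp
    qed
  qed
  then obtain a where a: "2 \<le> idx6 a" "a \<noteq> p" "a \<noteq> p'" by blast
  have M3: "minor3 ?z a p p' c1 c2 c3 = 0" if "2 \<le> idx6 c1" "2 \<le> idx6 c2" "2 \<le> idx6 c3" for c1 c2 c3
    by (rule blk_minor3[OF rk]) (use that a pq in auto)
  have D: "det3 (?v$a$b) (?v$a$4) (?v$a$5) (?z$p$b) (?z$p$4) (?z$p$5) (?z$p'$b) (?z$p'$4) (?z$p'$5)
    + det3 (?z$a$b) (?z$a$4) (?z$a$5) (?v$p$b) (?v$p$4) (?v$p$5) (?z$p'$b) (?z$p'$4) (?z$p'$5)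
    + det3 (?z$a$b) (?z$a$4) (?z$a$5) (?z$p$b) (?z$p$4) (?z$p$5) (?v$p'$b) (?v$p'$4) (?v$p'$5) = 0"
    if "2 \<le> idx6 b" for b
  proof (rule d_minor3[OF der])
    show "minor3 (\<gamma> t) a p p' b 4 5 = 0" for t by (rule blk_minor3[OF rk]) (use that a pq in auto)
  qed
  show False
    by (rule caseS_core[OF inv _ _ _ _ _ _ pp' a(1) pq(1,2) \<delta> M3 D])
       (use a in \<open>auto simp: xl_mult\<close>)
qed

lemma rank_blk_rows:
  fixes x :: "'a::field^6^6"
  shows "rank_blk i j x \<le> card {r::6. 6 - i \<le> idx6 r}"
proof -
  let ?A = "lr_block i j x"
  let ?S = "{r::6. 6 - i \<le> idx6 r}"
  have "rows ?A \<subseteq> vec.span ((\<lambda>r. ?A $ r) ` ?S)"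
  proof
    fix y assume "y \<in> rows ?A"
    then obtain r where y: "y = ?A $ r" unfolding rows_def row_def by (auto simp: vec_lambda_eta)
    show "y \<in> vec.span ((\<lambda>r. ?A $ r) ` ?S)"
    proof (cases "6 - i \<le> idx6 r")
      case True then show ?thesis unfolding y by (intro vec.span_base) auto
    next
      case False then have "y = 0" unfolding y by (auto simp: vec_eq_iff)
      then show ?thesis by (simp add: vec.span_zero)
    qed
  qed
  from rank_le_card[OF this] have "rank ?A \<le> card ((\<lambda>r. ?A $ r) ` ?S)" by simp
  also have "\<dots> \<le> card ?S" by (rule card_image_le) simp
  finally show ?thesis by (simp add: rank_blk_def)
qed

lemma card_S2: "card {r::6. 4 \<le> idx6 r} \<le> 2"
proof -
  have "{r::6. 4 \<le> idx6 r} \<subseteq> {4,5}"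
  proof
    fix r assume "r \<in> {r::6. 4 \<le> idx6 r}" then show "r \<in> {4,5}" using cases6[of r] by auto
  qed
  from card_mono[OF _ this] show ?thesis by (simp add: card_insert_if)
qed

lemma card_S4: "card {r::6. 2 \<le> idx6 r} \<le> 4"
proof -
  have sub: "{r::6. 2 \<le> idx6 r} \<subseteq> {2,3,4,5}"
  proof
    fix r assume "r \<in> {r::6. 2 \<le> idx6 r}" then show "r \<in> {2,3,4,5}" using cases6[of r] by auto
  qed
  have c: "card {2,3,4,5::6} = 4" by (simp add: card_insert_if)
  from card_mono[OF _ sub] show ?thesis unfolding c by simp
qed

lemma rank_blk42_cols:
  fixes x :: "'a::field^6^6"
  shows "rank_blk 4 2 x \<le> 2"
proof -
  let ?A = "lr_block 4 2 x"
  have "rows ?A \<subseteq> vec.span {axis 4 1, axis 5 1}"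
  proof
    fix y assume "y \<in> rows ?A"
    then obtain r where y: "y = ?A $ r" unfolding rows_def row_def by (auto simp: vec_lambda_eta)
    have "y = (y $ 4) *s axis 4 1 + (y $ 5) *s axis 5 1"
      unfolding y by (simp add: vec_eq_iff all6 axis_def)
    also have "\<dots> \<in> vec.span {axis 4 1, axis 5 1}"
      by (intro vec.span_add vec.span_scale vec.span_base) auto
    finally show "y \<in> vec.span {axis 4 1, axis 5 1}" .
  qed
  from rank_le_card[OF this] have "rank ?A \<le> card {axis 4 1 :: 'a^6, axis 5 1}" by simp
  also have "\<dots> \<le> 2" by (simp add: card_insert_if)
  finally show ?thesis by (simp add: rank_blk_def)
qed

lemma GR_facts:
  assumes "x \<in> G_R (a,b,c,d)"
  shows "invertible x" "int (rank_blk 4 4 x) = a" "int (rank_blk 4 2 x) = b"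
    "int (rank_blk 2 4 x) = c" "int (rank_blk 2 2 x) = d"
  using assms by (auto simp: G_R_def rank_matrix_def)

lemma TR_intro:
  assumes "\<And>\<gamma>::real \<Rightarrow> 'a::real_normed_field^6^6. (\<And>t. \<gamma> t \<in> G_R R) \<Longrightarrow>
     (\<gamma> has_vector_derivative (x_right ** \<gamma> 0)) (at 0) \<Longrightarrow> False"
  shows "transversal X_right (G_R R :: ('a^6^6) set)"
  unfolding transversal_def tangent_space_def X_right_def using assms by blast

lemma TL_intro:
  assumes "\<And>\<gamma>::real \<Rightarrow> 'a::real_normed_field^6^6. (\<And>t. \<gamma> t \<in> G_R R) \<Longrightarrow>
     (\<gamma> has_vector_derivative (\<gamma> 0 ** x_left)) (at 0) \<Longrightarrow> False"
  shows "transversal X_left (G_R R :: ('a^6^6) set)"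
  unfolding transversal_def tangent_space_def X_left_def using assms by blast

lemma main_gen:
  fixes R :: "int \<times> int \<times> int \<times> int"
  assumes ex: "R \<notin> exceptional_R"
  shows "transversal X_left (G_R R :: ('a::real_normed_field^6^6) set) \<or> transversal X_right (G_R R :: ('a^6^6) set)"
proof -
  obtain a b c d where R: "R = (a,b,c,d)" by (cases R) auto
  show ?thesis
  proof (cases "b = 0 \<or> d = 0 \<or> b = 1")
    case True
    have "transversal X_right (G_R R :: ('a^6^6) set)"
    proof (rule TR_intro)
      fix \<gamma> :: "real \<Rightarrow> 'a^6^6"
      assume mem: "\<And>t. \<gamma> t \<in> G_R R" and der: "(\<gamma> has_vector_derivative (x_right ** \<gamma> 0)) (at 0)"
      note F = GR_facts[OF mem[unfolded R]]
      have inv: "invertible (\<gamma> 0)" by (rule F(1))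
      show False
      proof (cases "b = 0")
        case True
        then have "\<And>t. rank_blk 4 2 (\<gamma> t) = 0" using F(3) by simp
        from caseA[OF inv der this] show False .
      next
        case b0: False
        show False
        proof (cases "d = 0")
          case True
          then have "\<And>t. rank_blk 2 2 (\<gamma> t) = 0" using F(5) by simp
          moreover have "1 \<le> rank_blk 4 2 (\<gamma> 0)" using F(3)[of 0] b0 by simp
          ultimately show False using caseB[OF inv der] by blast
        next
          case d0: False
          then have b1: "b = 1" using \<open>b = 0 \<or> d = 0 \<or> b = 1\<close> b0 by simp
          have "\<And>t. rank_blk 4 2 (\<gamma> t) \<le> 1" using F(3) b1 by (metis of_nat_le_1_iff order_refl of_nat_1 of_nat_eq_iff)
          moreover have "1 \<le> rank_blk 2 2 (\<gamma> 0)" using F(5)[of 0] d0 by simp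
          ultimately show False using caseC[OF inv der] by blast
        qed
      qed
    qed
    then show ?thesis by simp
  next
    case False
    then have b0: "b \<noteq> 0" and d0: "d \<noteq> 0" and b1: "b \<noteq> 1" by auto
    have "transversal X_left (G_R R :: ('a^6^6) set)"
    proof (rule TL_intro)
      fix \<gamma> :: "real \<Rightarrow> 'a^6^6"
      assume mem: "\<And>t. \<gamma> t \<in> G_R R" and der: "(\<gamma> has_vector_derivative (\<gamma> 0 ** x_left)) (at 0)"
      note F = GR_facts[OF mem[unfolded R]]
      have inv: "invertible (\<gamma> 0)" by (rule F(1))
      have dpos: "1 \<le> rank_blk 2 2 (\<gamma> 0)" using F(5)[of 0] d0 by simp
      have b2: "2 \<le> rank_blk 4 2 (\<gamma> 0)" using F(3)[of 0] b0 b1 by simp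
      show False
      proof (cases "c = 0")
        case True
        then have "\<And>t. rank_blk 2 4 (\<gamma> t) = 0" using F(4) by simp
        from caseA'[OF inv der this] show False .
      next
        case c0: False
        show False
        proof (cases "c = 1")
          case True
          then have "\<And>t. rank_blk 2 4 (\<gamma> t) \<le> 1" using F(4) by (metis of_nat_le_1_iff order_refl of_nat_1 of_nat_eq_iff)
          from caseC'[OF inv der this dpos] show False .
        next
          case c1: False
          show False
          proof (cases "a \<le> 2")
            case True
            then have "\<And>t. rank_blk 4 4 (\<gamma> t) \<le> 2" using F(2) by (metis of_nat_le_iff of_nat_numeral)
            from caseS[OF inv der this b2] show False .
          next
            case False
            have "rank_blk 4 4 (\<gamma> 0) \<le> 4" using rank_blk_rows[of 4 4 "\<gamma> 0"] card_S4 by simp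
            moreover have "rank_blk 2 4 (\<gamma> 0) \<le> 2" using rank_blk_rows[of 2 4 "\<gamma> 0"] card_S2 by simp
            moreover have "rank_blk 2 2 (\<gamma> 0) \<le> 2" using rank_blk_rows[of 2 2 "\<gamma> 0"] card_S2 by simp
            moreover have "rank_blk 4 2 (\<gamma> 0) \<le> 2" by (rule rank_blk42_cols)
            ultimately have "a \<in> {3,4}" "b = 2" "c = 2" "d \<in> {1,2}"
              using F(2)[of 0] F(3)[of 0] F(4)[of 0] F(5)[of 0] False b0 b1 c0 c1 d0 by auto
            then have "R \<in> exceptional_R" unfolding R exceptional_R_def by auto
            with ex show False by simp
          qed
        qed
      qed
    qed
    then show ?thesis by simp
  qed
qed

theorem proposition4p2:
  fixes R :: "int \<times> int \<times> int \<times> int"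
  assumes "R \<notin> exceptional_R"
  shows "(G_R R \<noteq> ({} :: (real^6^6) set) \<longrightarrow>
            transversal X_left (G_R R :: (real^6^6) set) \<or> transversal X_right (G_R R :: (real^6^6) set))
       \<and> (G_R R \<noteq> ({} :: (complex^6^6) set) \<longrightarrow>
            transversal X_left (G_R R :: (complex^6^6) set) \<or> transversal X_right (G_R R :: (complex^6^6) set))"
  using main_gen[OF assms, where 'a=real] main_gen[OF assms, where 'a=complex] by blast
end
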